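(* For every $\delta>0$ there exists $p=\Theta(1/\sqrt n)$ such that the public-key encryption scheme $(\mathsf{Gen},\mathsf{Enc},\mathsf{Dec})$ described in the context, with parameter $p$, is $(1-\delta)$-correct: for every $\mu\in\{0,1\}$, $\Pr[\mathsf{Dec}(\mathsf{sk},\mathsf{ct})=\mu : (\mathsf{pk},\mathsf{sk})\leftarrow\mathsf{Gen}(1^n),\ \mathsf{ct}\leftarrow\mathsf{Enc}(\mathsf{pk},\mu)]\ge 1-\delta.$
   Context: Symplectic inner product on $\mathbb{Z}_2^{2n}$: $(\mathbf a,\mathbf b)\odot(\mathbf a',\mathbf b')=\mathbf a\cdot\mathbf b'+\mathbf a'\cdot\mathbf b\pmod2$; for $\mathbf f\in\mathbb{Z}_2^{2n}$ and a matrix $\mathbf A$ with $2n$ rows, $\mathbf f\odot\mathbf A$ is the row vector whose $j$-th entry is $\mathbf f\odot(\text{$j$-th column of }\mathbf A)$. A "random full-rank isotropic matrix" $\mathbf A\in\mathbb{Z}_2^{2n\times n}$ is uniform among matrices of column rank $n$ whose columns are pairwise symplectically orthogonal. $\mathcal{D}_p^{\otimes n}$: random $\mathbf e\in\mathbb{Z}_2^{2n}$ with independent pairs $(e_j,e_{n+j})$, each $(0,0)$ w.p. $1-p$ and each of $(0,1),(1,0),(1,1)$ w.p. $p/3$. The scheme (security parameter $n$): $\mathsf{Gen}(1^n)$ samples a random full-rank isotropic $\mathbf A\in\mathbb{Z}_2^{2n\times n}$, $\mathbf x\sim\mathbb{Z}_2^n$ uniform, $\mathbf e\sim\mathcal{D}_p^{\otimes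 n}$, and outputs $\mathsf{pk}=(\mathbf A,\mathbf b=\mathbf A\mathbf x+\mathbf e)$, $\mathsf{sk}=\mathbf x$. $\mathsf{Enc}(\mathsf{pk},\mu)$ for $\mu\in\{0,1\}$ samples fresh $\mathbf f\sim\mathcal{D}_p^{\otimes n}$ and outputs $\mathsf{ct}=(\mathbf f\odot\mathbf A,\ \mathbf f\odot\mathbf b+\mu)$. $\mathsf{Dec}(\mathsf{sk},(\mathbf u,c))$ outputs $c+\mathbf u\cdot\mathbf x \pmod 2$ (standard dot product). *)

theory Defs
  imports "HOL-Probability.Probability" "HOL-Library.Landau_Symbols" "HOL-Library.Z2"
begin

text \<open>Vectors in Z_2^m are functions nat => bit (entries at indices >= m are 0);
  a 2n x n matrix is a function nat => nat => bit (row, column).\<close>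

type_synonym vec = "nat \<Rightarrow> bit"
type_synonym mat = "nat \<Rightarrow> nat \<Rightarrow> bit"

definition vecs :: "nat \<Rightarrow> vec set" where
  "vecs m = {v. \<forall>i\<ge>m. v i = 0}"

definition mats :: "nat \<Rightarrow> nat \<Rightarrow> mat set" where
  "mats r c = {A. \<forall>i j. (r \<le> i \<or> c \<le> j) \<longrightarrow> A i j = 0}"

definition sympl :: "nat \<Rightarrow> vec \<Rightarrow> vec \<Rightarrow> bit" where
  "sympl n a b = (\<Sum>j<n. a j * b (n + j) + b j * a (n + j))"

definition col :: "mat \<Rightarrow> nat \<Rightarrow> vec" where
  "col A j = (\<lambda>i. A i j)"

definition full_col_rank :: "nat \<Rightarrow> mat \<Rightarrow> bool" where
  "full_col_rank n A \<longleftrightarrow>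
     (\<forall>c \<in> vecs n. (\<forall>i<2*n. (\<Sum>j<n. c j * A i j) = 0) \<longrightarrow> (\<forall>j<n. c j = 0))"

definition isotropic :: "nat \<Rightarrow> mat \<Rightarrow> bool" where
  "isotropic n A \<longleftrightarrow> (\<forall>j<n. \<forall>k<n. sympl n (col A j) (col A k) = 0)"

definition iso_full_rank :: "nat \<Rightarrow> mat set" where
  "iso_full_rank n = {A \<in> mats (2*n) n. full_col_rank n A \<and> isotropic n A}"

definition mat_vec :: "nat \<Rightarrow> mat \<Rightarrow> vec \<Rightarrow> vec" where
  "mat_vec n A x = (\<lambda>i. if i < 2*n then (\<Sum>j<n. A i j * x j) else 0)"

text \<open>Single-qubit depolarizing-type noise on a pair (e_j, e_{n+j}).\<close>
definition pauli_pmf :: "real \<Rightarrow> (bit \<times> bit) pmf" where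
  "pauli_pmf p = do { nz \<leftarrow> bernoulli_pmf p;
                      if nz then pmf_of_set {(0,1),(1,0),(1,1)} else return_pmf (0,0) }"

definition noise :: "real \<Rightarrow> nat \<Rightarrow> vec pmf" where
  "noise p n = map_pmf
     (\<lambda>P i. if i < n then fst (P i) else if i < 2*n then snd (P (i - n)) else 0)
     (Pi_pmf {..<n} (0,0) (\<lambda>_. pauli_pmf p))"

definition Gen :: "real \<Rightarrow> nat \<Rightarrow> ((mat \<times> vec) \<times> vec) pmf" where
  "Gen p n = do {
     A \<leftarrow> pmf_of_set (iso_full_rank n);
     x \<leftarrow> pmf_of_set (vecs n);
     e \<leftarrow> noise p n;
     return_pmf ((A, \<lambda>i. mat_vec n A x i + e i), x) }"

definition Enc :: "real \<Rightarrow> nat \<Rightarrow> mat \<times> vec \<Rightarrow> bit \<Rightarrow> (vec \<times> bit) pmf" where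
  "Enc p n pk \<mu> = (case pk of (A, b) \<Rightarrow> do {
     f \<leftarrow> noise p n;
     return_pmf (\<lambda>j. if j < n then sympl n f (col A j) else 0, sympl n f b + \<mu>) })"

definition Dec :: "nat \<Rightarrow> vec \<Rightarrow> vec \<times> bit \<Rightarrow> bit" where
  "Dec n x ct = (case ct of (u, c) \<Rightarrow> c + (\<Sum>j<n. u j * x j))"

end

theory Submission
  imports Defs
begin
declare add_bit_eq_xor[simp del] mult_bit_eq_and[simp del]

lemma bit_self_add[simp]: "(a::bit) + a = 0"
  by (cases a) simp_all

lemma sympl_add: "sympl n f (\<lambda>i. a i + b i) = sympl n f a + sympl n f b"
  unfolding sympl_def by (simp add: sum.distrib[symmetric] algebra_simps)

lemma sympl_matvec: "sympl n f (mat_vec n A x) = (\<Sum>j<n. sympl n f (col A j) * x j)"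
proof -
  have "sympl n f (mat_vec n A x) = (\<Sum>k<n. f k * (\<Sum>j<n. A (n+k) j * x j) + (\<Sum>j<n. A k j * x j) * f (n+k))"
    unfolding sympl_def mat_vec_def by (intro sum.cong) auto
  also have "\<dots> = (\<Sum>k<n. \<Sum>j<n. (f k * A (n+k) j + A k j * f (n+k)) * x j)"
    by (simp add: sum_distrib_left sum_distrib_right sum.distrib[symmetric] algebra_simps)
  also have "\<dots> = (\<Sum>j<n. \<Sum>k<n. (f k * A (n+k) j + A k j * f (n+k)) * x j)"
    by (rule sum.swap)
  also have "\<dots> = (\<Sum>j<n. sympl n f (col A j) * x j)"
    unfolding sympl_def col_def by (simp add: sum_distrib_right)
  finally show ?thesis .
qed

lemma dec_ident: "sympl n f (\<lambda>i. mat_vec n A x i + e i) + \<mu> + (\<Sum>j<n. (if j < n then sympl n f (col A j) else 0) * x j) = sympl n f e + \<mu>"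
proof -
  have s: "(\<Sum>j<n. (if j < n then sympl n f (col A j) else 0) * x j) = sympl n f (mat_vec n A x)"
    by (simp add: sympl_matvec)
  show ?thesis unfolding s sympl_add
    by (metis add.commute add.left_commute add_0 bit_self_add)
qed

lemma dec_ident2: "sympl n f (\<lambda>i. mat_vec n A x i + e i) + \<mu> + (\<Sum>j<n. sympl n f (col A j) * x j) = sympl n f e + \<mu>"
  using dec_ident[of n f A x e \<mu>] by simp

lemma main_pmf: "do { (pk, sk) \<leftarrow> Gen p n; ct \<leftarrow> Enc p n pk \<mu>; return_pmf (Dec n sk ct) }
  = map_pmf (\<lambda>(e,f). sympl n f e + \<mu>) (pair_pmf (noise p n) (noise p n))"
  unfolding Gen_def Enc_def Dec_def pair_pmf_def
  by (simp add: map_bind_pmf bind_assoc_pmf bind_return_pmf dec_ident2)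

lemma pauli_map: "0 \<le> p \<Longrightarrow> p \<le> 1 \<Longrightarrow> map_pmf (\<lambda>z. z \<noteq> (0,0)) (pauli_pmf p) = bernoulli_pmf p"
proof -
  have a: "map_pmf (\<lambda>z. z \<noteq> (0,0)) (pmf_of_set {(0::bit,1::bit),(1,0),(1,1)}) = return_pmf True"
  proof -
    have "map_pmf (\<lambda>z. z \<noteq> (0,0)) (pmf_of_set {(0::bit,1::bit),(1,0),(1,1)})
        = map_pmf (\<lambda>_. True) (pmf_of_set {(0::bit,1::bit),(1,0),(1,1)})"
      by (rule map_pmf_cong) auto
    then show ?thesis by simp
  qed
  show "0 \<le> p \<Longrightarrow> p \<le> 1 \<Longrightarrow> ?thesis"
    unfolding pauli_pmf_def map_bind_pmf
    apply (subst bind_pmf_cong[where g="\<lambda>nz. return_pmf nz"])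
      apply (auto simp: a bind_return_pmf')
    done
qed

lemma pauli_prob: "0 \<le> p \<Longrightarrow> p \<le> 1 \<Longrightarrow> measure_pmf.prob (pauli_pmf p) {z. z \<noteq> (0,0)} = p"
proof -
  assume h: "0 \<le> p" "p \<le> 1"
  have "measure_pmf.prob (pauli_pmf p) {z. z \<noteq> (0,0)} = measure_pmf.prob (map_pmf (\<lambda>z. z \<noteq> (0,0)) (pauli_pmf p)) {True}"
    by (simp add: vimage_def)
  also have "\<dots> = p" using h by (simp add: pauli_map measure_pmf_single)
  finally show ?thesis .
qed

lemma prob_product_any:
  "measure_pmf.prob (pair_pmf M N) (A \<times> B) = measure_pmf.prob M A * measure_pmf.prob N B"
proof -
  let ?f = "\<lambda>x. x \<in> A" and ?g = "\<lambda>y. y \<in> B"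
  have e: "pair_pmf (map_pmf ?f M) (map_pmf ?g N) = map_pmf (apsnd ?g) (map_pmf (apfst ?f) (pair_pmf M N))"
    by (simp add: pair_map_pmf1 pair_map_pmf2 map_pmf_comp)
  have "A \<times> B = (apfst ?f -` (apsnd ?g -` ({True} \<times> {True})))" by auto
  then have "measure_pmf.prob (pair_pmf M N) (A \<times> B) = measure_pmf.prob (pair_pmf (map_pmf ?f M) (map_pmf ?g N)) ({True} \<times> {True})"
    unfolding e by simp
  also have "\<dots> = measure_pmf.prob (map_pmf ?f M) {True} * measure_pmf.prob (map_pmf ?g N) {True}"
    by (rule measure_pmf_prob_product) auto
  also have "\<dots> = measure_pmf.prob M A * measure_pmf.prob N B"
    by (simp add: vimage_def)
  finally show ?thesis .
qed

definition NZ :: "nat \<Rightarrow> nat \<Rightarrow> vec set" where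
  "NZ n j = {v. v j \<noteq> 0 \<or> v (n+j) \<noteq> 0}"

lemma noise_prob: "0 \<le> p \<Longrightarrow> p \<le> 1 \<Longrightarrow> j < n \<Longrightarrow> measure_pmf.prob (noise p n) (NZ n j) = p"
proof -
  assume h: "0 \<le> p" "p \<le> 1" "j < n"
  let ?g = "(\<lambda>P i. if i < n then fst (P i) else if i < 2*n then snd (P (i - n)) else (0::bit))"
  have "?g -` NZ n j = (\<lambda>P. P j) -` {z. z \<noteq> (0,0)}"
    using h(3) by (auto simp: NZ_def prod_eq_iff)
  then have "measure_pmf.prob (noise p n) (NZ n j) =
     measure_pmf.prob (map_pmf (\<lambda>P. P j) (Pi_pmf {..<n} (0,0) (\<lambda>_. pauli_pmf p))) {z. z \<noteq> (0,0)}"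
    unfolding noise_def by simp
  also have "\<dots> = p" using h by (simp add: Pi_pmf_component pauli_prob)
  finally show ?thesis .
qed

lemma sympl_nz: "sympl n f e \<noteq> 0 \<Longrightarrow> \<exists>j<n. f \<in> NZ n j \<and> e \<in> NZ n j"
proof (rule ccontr)
  assume a: "sympl n f e \<noteq> 0" "\<not> (\<exists>j<n. f \<in> NZ n j \<and> e \<in> NZ n j)"
  have "\<forall>j<n. f j * e (n + j) + e j * f (n + j) = 0"
    using a(2) unfolding NZ_def by auto
  then have "sympl n f e = 0" unfolding sympl_def by simp
  with a(1) show False by simp
qed

lemma correct_bound:
  assumes "0 \<le> p" "p \<le> 1"
  shows "measure_pmf.prob (map_pmf (\<lambda>(e,f). sympl n f e + \<mu>) (pair_pmf (noise p n) (noise p n))) {\<mu>}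
     \<ge> 1 - real n * p^2"
proof -
  let ?M = "pair_pmf (noise p n) (noise p n)"
  let ?S = "{ef. sympl n (snd ef) (fst ef) = 0}"
  let ?U = "\<Union>j\<in>{..<n}. NZ n j \<times> NZ n j"
  have pre: "(\<lambda>(e,f). sympl n f e + \<mu>) -` {\<mu>} = ?S"
    by (auto simp: add.commute[of _ \<mu>])
  have un: "UNIV \<subseteq> ?S \<union> ?U" using sympl_nz by fastforce
  have "1 \<le> measure_pmf.prob ?M (?S \<union> ?U)"
  proof -
    have "?S \<union> ?U = UNIV" using un by blast
    then show ?thesis by simp
  qed
  also have "\<dots> \<le> measure_pmf.prob ?M ?S + measure_pmf.prob ?M ?U"
    by (rule measure_Un_le) auto
  also have "measure_pmf.prob ?M ?U \<le> (\<Sum>j\<in>{..<n}. measure_pmf.prob ?M (NZ n j \<times> NZ n j))"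
    by (rule measure_pmf.finite_measure_subadditive_finite) auto
  also have "\<dots> = (\<Sum>j\<in>{..<n}. p * p)"
    using assms by (intro sum.cong) (auto simp: prob_product_any noise_prob)
  also have "\<dots> = real n * p^2" by (simp add: power2_eq_square)
  finally have "1 - real n * p^2 \<le> measure_pmf.prob ?M ?S" by simp
  then show ?thesis using pre by simp
qed

theorem theorem5p2:
  shows "\<forall>\<delta>::real. \<delta> > 0 \<longrightarrow>
    (\<exists>p :: nat \<Rightarrow> real. p \<in> \<Theta>(\<lambda>n. 1 / sqrt (real n)) \<and> (\<forall>n. 0 \<le> p n \<and> p n \<le> 1) \<and>
      (\<forall>n (\<mu>::bit).
         measure_pmf.prob
           (do { (pk, sk) \<leftarrow> Gen (p n) n; ct \<leftarrow> Enc (p n) n pk \<mu>; return_pmf (Dec n sk ct) })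
           {\<mu>} \<ge> 1 - \<delta>))"
proof (intro allI impI)
  fix \<delta> :: real assume d: "\<delta> > 0"
  define c where "c = min 1 (sqrt \<delta>)"
  have c0: "0 < c" and c1: "c \<le> 1" and c2: "c^2 \<le> \<delta>"
    using d unfolding c_def by (auto simp: min_def power_le_one)
  define p where "p = (\<lambda>n::nat. c * (1 / sqrt (real n)))"
  have th: "p \<in> \<Theta>(\<lambda>n. 1 / sqrt (real n))"
  proof -
    have "(\<lambda>n. c * (1 / sqrt (real n))) \<in> \<Theta>(\<lambda>n. 1 / sqrt (real n)) \<longleftrightarrow> (\<lambda>n. 1 / sqrt (real n)) \<in> \<Theta>(\<lambda>n. 1 / sqrt (real n))"
      by (rule landau_theta.cmult_in_iff) (use c0 in simp)
    then show ?thesis unfolding p_def by (simp only:) (rule bigtheta_refl)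
  qed
  have pr: "0 \<le> p n \<and> p n \<le> 1" for n
  proof (cases "n = 0")
    case False
    then have "1 / sqrt (real n) \<le> 1" by simp
    moreover have "0 \<le> 1 / sqrt (real n)" by simp
    ultimately show ?thesis using c0 c1 unfolding p_def
      using mult_mono[of c 1 "1 / sqrt (real n)" 1] by simp
  qed (simp add: p_def)
  have np: "real n * (p n)^2 \<le> \<delta>" for n
  proof (cases "n = 0")
    case True then show ?thesis using d by simp
  next
    case False
    then have "real n * (p n)^2 = c^2" unfolding p_def
      by (simp add: power_divide power_mult_distrib)
    then show ?thesis using c2 by simp
  qed
  show "\<exists>p :: nat \<Rightarrow> real. p \<in> \<Theta>(\<lambda>n. 1 / sqrt (real n)) \<and> (\<forall>n. 0 \<le> p n \<and> p n \<le> 1) \<and>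
      (\<forall>n (\<mu>::bit).
         measure_pmf.prob
           (do { (pk, sk) \<leftarrow> Gen (p n) n; ct \<leftarrow> Enc (p n) n pk \<mu>; return_pmf (Dec n sk ct) })
           {\<mu>} \<ge> 1 - \<delta>)"
  proof (intro exI conjI allI)
    show "p \<in> \<Theta>(\<lambda>n. 1 / sqrt (real n))" by (rule th)
  next
    fix n show "0 \<le> p n" "p n \<le> 1" using pr[of n] by auto
  next
    fix n and \<mu> :: bit
    have "1 - \<delta> \<le> 1 - real n * (p n)^2" using np[of n] by simp
    also have "\<dots> \<le> measure_pmf.prob (map_pmf (\<lambda>(e,f). sympl n f e + \<mu>) (pair_pmf (noise (p n) n) (noise (p n) n))) {\<mu>}"
      using pr[of n] by (intro correct_bound) auto
    finally show "measure_pmf.prob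
           (do { (pk, sk) \<leftarrow> Gen (p n) n; ct \<leftarrow> Enc (p n) n pk \<mu>; return_pmf (Dec n sk ct) })
           {\<mu>} \<ge> 1 - \<delta>" by (simp only: main_pmf)
  qed
qed

end
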